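(* Let $Q$ be a countable quandle which is semi-latin at $\hat q\in Q$, equipped with a circular order or a right order, and let $(q_i)_{i\ge1}$ be an enumeration of $Q$ with $q_1=\hat q$. Then the dynamical realization $\rho$ constructed from $(q_i)$ acts freely on $\iota(\hat q)$, i.e. for $q\ne r$ in $Q$ one has $\rho(q)(\iota(\hat q))\neq\rho(r)(\iota(\hat q))$.
   Context: Quandle: set with operation $*$ satisfying $q*q=q$, unique right division, and $(q*r)*s=(q*s)*(r*s)$. Semi-latin at $\hat q$: $r\mapsto\hat q*r$ is injective. A circular order is $c:Q^3\to\{-1,0,1\}$ vanishing exactly on triples with a repeated entry, satisfying $c(q_2,q_3,q_4)-c(q_1,q_3,q_4)+c(q_1,q_2,q_4)-c(q_1,q_2,q_3)=0$ and $c(q_1*q,q_2*q,q_3*q)=c(q_1,q_2,q_3)$. A right order is a total order with $q_1<q_2\Rightarrow q_1*q<q_2*q$. Dynamical realization (circular case): define $\iota:Q\to S^1$ by choosing distinct $\iota(q_1),\iota(q_2)$ and letting $\iota(q_n)$ be the midpoint of the unique component of $S^1\setminus\{\iota(q_1),\dots,\iota(q_{n-1})\}$ with $c(q_i,q_j,q_k)=\mathrm{ord}(\iota(q_i),\iota(q_j),\iota(q_k))$ for all $i,j,k\le n$ ($\mathrm{ord}$ the standard cyclic orientation). Right order case: $\iota:Q\to\mathbb{R}$, $\iota(q_1)$ arbitrary, $\iota(q_n)$ equal to (minimum previous value)$-1$, (maximum previous value)$+1$, or the midpoint of its immediate neighbours' values according to the position of $q_n$ among $q_1,\dots,q_{n-1}$.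 In both cases $\rho(q)(\iota(r))=\iota(r*q)$ on $\iota(Q)$, extended continuously to the closure and affinely on complementary intervals. *)

theory Defs
  imports Complex_Main "HOL-Library.Countable_Set"
begin

text \<open>Quandles on a carrier set Q with operation op (op q r = q * r).\<close>

definition quandle :: "'a set \<Rightarrow> ('a \<Rightarrow> 'a \<Rightarrow> 'a) \<Rightarrow> bool" where
  "quandle Q op \<longleftrightarrow>
     (\<forall>x\<in>Q. \<forall>y\<in>Q. op x y \<in> Q) \<and>
     (\<forall>x\<in>Q. op x x = x) \<and>
     (\<forall>q\<in>Q. \<forall>s\<in>Q. \<exists>!r. r \<in> Q \<and> op r s = q) \<and>
     (\<forall>q\<in>Q. \<forall>r\<in>Q. \<forall>s\<in>Q. op (op q r) s = op (op q s) (op r s))"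

definition semi_latin :: "'a set \<Rightarrow> ('a \<Rightarrow> 'a \<Rightarrow> 'a) \<Rightarrow> 'a \<Rightarrow> bool" where
  "semi_latin Q op qh \<longleftrightarrow> qh \<in> Q \<and> inj_on (\<lambda>r. op qh r) Q"

definition circular_order :: "'a set \<Rightarrow> ('a \<Rightarrow> 'a \<Rightarrow> 'a) \<Rightarrow> ('a \<Rightarrow> 'a \<Rightarrow> 'a \<Rightarrow> int) \<Rightarrow> bool" where
  "circular_order Q op c \<longleftrightarrow>
     (\<forall>x\<in>Q. \<forall>y\<in>Q. \<forall>z\<in>Q. c x y z \<in> {-1, 0, 1}) \<and>
     (\<forall>x\<in>Q. \<forall>y\<in>Q. \<forall>z\<in>Q. c x y z = 0 \<longleftrightarrow> (x = y \<or> y = z \<or> x = z)) \<and>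
     (\<forall>q1\<in>Q. \<forall>q2\<in>Q. \<forall>q3\<in>Q. \<forall>q4\<in>Q.
        c q2 q3 q4 - c q1 q3 q4 + c q1 q2 q4 - c q1 q2 q3 = 0) \<and>
     (\<forall>q1\<in>Q. \<forall>q2\<in>Q. \<forall>q3\<in>Q. \<forall>q\<in>Q.
        c (op q1 q) (op q2 q) (op q3 q) = c q1 q2 q3)"

definition right_order :: "'a set \<Rightarrow> ('a \<Rightarrow> 'a \<Rightarrow> 'a) \<Rightarrow> ('a \<Rightarrow> 'a \<Rightarrow> bool) \<Rightarrow> bool" where
  "right_order Q op lt \<longleftrightarrow>
     (\<forall>x\<in>Q. \<not> lt x x) \<and>
     (\<forall>x\<in>Q. \<forall>y\<in>Q. \<forall>z\<in>Q. lt x y \<longrightarrow> lt y z \<longrightarrow> lt x z) \<and>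
     (\<forall>x\<in>Q. \<forall>y\<in>Q. x \<noteq> y \<longrightarrow> lt x y \<or> lt y x) \<and>
     (\<forall>q1\<in>Q. \<forall>q2\<in>Q. \<forall>q\<in>Q. lt q1 q2 \<longrightarrow> lt (op q1 q) (op q2 q))"

text \<open>An enumeration of Q: a bijection from an initial segment J of nat (finite or all of nat)
  onto Q. Index i corresponds to the paper's q_(i+1), so e 0 is q_1.\<close>
definition enumeration :: "'a set \<Rightarrow> (nat \<Rightarrow> 'a) \<Rightarrow> nat set \<Rightarrow> bool" where
  "enumeration Q e J \<longleftrightarrow> (J = UNIV \<or> (\<exists>N. J = {..<N})) \<and> bij_betw e J Q"

text \<open>The circle S^1 is modelled as R/Z, points represented in [0,1).
  cord is the standard cyclic orientation: cord x y z = 1 iff, moving counterclockwise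
  (increasing angle) from x, one meets y before z.\<close>
definition cord :: "real \<Rightarrow> real \<Rightarrow> real \<Rightarrow> int" where
  "cord x y z = (if x = y \<or> y = z \<or> x = z then 0
                 else if frac (y - x) < frac (z - x) then 1 else -1)"

text \<open>For n \<ge> 2 (paper: q_n with n \<ge> 3), iota(e n) is the midpoint of a component
  (open counterclockwise arc from a to b with no earlier point inside) of S^1 minus the earlier
  points, and the cyclic orders agree on all triples of indices \<le> n.\<close>
definition circ_iota :: "'a set \<Rightarrow> ('a \<Rightarrow> 'a \<Rightarrow> 'a \<Rightarrow> int) \<Rightarrow> (nat \<Rightarrow> 'a) \<Rightarrow> nat set
                          \<Rightarrow> ('a \<Rightarrow> real) \<Rightarrow> bool" where
  "circ_iota Q c e J \<iota> \<longleftrightarrow>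
     (\<forall>i\<in>J. 0 \<le> \<iota> (e i) \<and> \<iota> (e i) < 1) \<and>
     (1 \<in> J \<longrightarrow> \<iota> (e 0) \<noteq> \<iota> (e 1)) \<and>
     (\<forall>n\<in>J. 2 \<le> n \<longrightarrow>
        (\<exists>a\<in>\<iota> ` e ` {..<n}. \<exists>b\<in>\<iota> ` e ` {..<n}. a \<noteq> b \<and>
           (\<forall>p\<in>\<iota> ` e ` {..<n}. \<not> (0 < frac (p - a) \<and> frac (p - a) < frac (b - a))) \<and>
           \<iota> (e n) = frac (a + frac (b - a) / 2)) \<and>
        (\<forall>i\<le>n. \<forall>j\<le>n. \<forall>k\<le>n.
           c (e i) (e j) (e k) = cord (\<iota> (e i)) (\<iota> (e j)) (\<iota> (e k))))"

definition right_iota :: "'a set \<Rightarrow> ('a \<Rightarrow> 'a \<Rightarrow> bool) \<Rightarrow> (nat \<Rightarrow> 'a) \<Rightarrow> nat set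
                          \<Rightarrow> ('a \<Rightarrow> real) \<Rightarrow> bool" where
  "right_iota Q lt e J \<iota> \<longleftrightarrow>
     (\<forall>n\<in>J. 1 \<le> n \<longrightarrow>
        (if \<forall>p\<in>e ` {..<n}. lt (e n) p then \<iota> (e n) = Min (\<iota> ` e ` {..<n}) - 1
         else if \<forall>p\<in>e ` {..<n}. lt p (e n) then \<iota> (e n) = Max (\<iota> ` e ` {..<n}) + 1
         else (\<exists>a\<in>e ` {..<n}. \<exists>b\<in>e ` {..<n}. lt a (e n) \<and> lt (e n) b \<and>
                 (\<forall>p\<in>e ` {..<n}. \<not> (lt a p \<and> lt p b)) \<and>
                 \<iota> (e n) = (\<iota> a + \<iota> b) / 2)))"

text \<open>The defining property of the action rho on iota(Q): rho(q)(iota r) = iota(r * q).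
  (The continuous/affine extension off iota(Q) is not constrained here.)\<close>
definition realizes :: "'a set \<Rightarrow> ('a \<Rightarrow> 'a \<Rightarrow> 'a) \<Rightarrow> ('a \<Rightarrow> real) \<Rightarrow> ('a \<Rightarrow> real \<Rightarrow> real) \<Rightarrow> bool" where
  "realizes Q op \<iota> \<rho> \<longleftrightarrow> (\<forall>q\<in>Q. \<forall>r\<in>Q. \<rho> q (\<iota> r) = \<iota> (op r q))"

end

theory Submission
  imports Defs
begin

lemma enum_down: "enumeration Q e J \<Longrightarrow> n \<in> J \<Longrightarrow> i \<le> n \<Longrightarrow> i \<in> J"
  unfolding enumeration_def by auto

lemma circ_inj:
  assumes co: "circular_order Q op c" and ci: "circ_iota Q c e J \<iota>" and en: "enumeration Q e J"
    and iJ: "i \<in> J" and jJ: "j \<in> J" and ij: "i \<noteq> j"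
  shows "\<iota> (e i) \<noteq> \<iota> (e j)"
proof
  assume eq: "\<iota> (e i) = \<iota> (e j)"
  have bij: "bij_betw e J Q" using en unfolding enumeration_def by auto
  hence inj: "inj_on e J" and img: "e ` J = Q" by (auto simp: bij_betw_def)
  show False
  proof (cases "2 \<in> J")
    case True
    define n where "n = max (max i j) 2"
    have nJ: "n \<in> J" unfolding n_def using True iJ jJ by (simp add: max_def)
    define k where "k = (if 0 \<noteq> i \<and> 0 \<noteq> j then 0 else if 1 \<noteq> i \<and> 1 \<noteq> j then 1 else (2::nat))"
    have k: "k \<in> {0,1,2::nat}" "k \<noteq> i" "k \<noteq> j" unfolding k_def using ij by auto
    have kn: "k \<le> n" using k unfolding n_def by auto
    have kJ: "k \<in> J" using enum_down[OF en nJ kn] .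
    have in_n: "i \<le> n" "j \<le> n" unfolding n_def by auto
    have "c (e i) (e j) (e k) = cord (\<iota> (e i)) (\<iota> (e j)) (\<iota> (e k))"
      using ci nJ True in_n kn unfolding circ_iota_def n_def
      by (metis max.cobounded2 max_def)
    also have "\<dots> = 0" using eq unfolding cord_def by simp
    finally have c0: "c (e i) (e j) (e k) = 0" .
    have d: "e i \<noteq> e j" "e j \<noteq> e k" "e i \<noteq> e k"
      using inj iJ jJ kJ ij k by (auto dest: inj_onD)
    have "e i \<in> Q" "e j \<in> Q" "e k \<in> Q" using img iJ jJ kJ by auto
    thus False using co c0 d unfolding circular_order_def by blast
  next
    case False
    have "i < 2" "j < 2" using False enum_down[OF en iJ] enum_down[OF en jJ] by (metis not_less)+
    hence "(i = 0 \<and> j = 1) \<or> (i = 1 \<and> j = 0)" using ij by auto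
    moreover have "1 \<in> J" using iJ jJ ij enum_down[OF en] by (metis calculation)
    ultimately show False using ci eq unfolding circ_iota_def by auto
  qed
qed

lemma right_mono:
  assumes ro: "right_order Q op lt" and ri: "right_iota Q lt e J \<iota>" and en: "enumeration Q e J"
  shows "n \<in> J \<Longrightarrow> \<forall>i\<le>n. \<forall>j\<le>n. lt (e i) (e j) \<longrightarrow> \<iota> (e i) < \<iota> (e j)"
proof (induction n)
  case 0
  have "e 0 \<in> Q" using en 0 unfolding enumeration_def bij_betw_def by auto
  then show ?case using ro unfolding right_order_def by auto
next
  case (Suc n)
  define m where "m = Suc n"
  have mJ: "m \<in> J" using Suc.prems m_def by simp
  have nJ: "n \<in> J" using enum_down[OF en mJ] m_def by simp
  note IH = Suc.IH[OF nJ]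
  have bij: "bij_betw e J Q" using en unfolding enumeration_def by auto
  hence inj: "inj_on e J" and img: "e ` J = Q" by (auto simp: bij_betw_def)
  define P where "P = e ` {..<m}"
  define x where "x = e m"
  have subJ: "{..<m} \<subseteq> J" using enum_down[OF en mJ] by auto
  have PQ: "P \<subseteq> Q" using subJ img P_def by auto
  have xQ: "x \<in> Q" using mJ img x_def by auto
  have xP: "x \<notin> P" using inj subJ mJ unfolding P_def x_def by (auto dest: inj_onD)
  have irr: "\<And>y. y \<in> Q \<Longrightarrow> \<not> lt y y" using ro unfolding right_order_def by auto
  have tr: "\<And>y z w. y \<in> Q \<Longrightarrow> z \<in> Q \<Longrightarrow> w \<in> Q \<Longrightarrow> lt y z \<Longrightarrow> lt z w \<Longrightarrow> lt y w"
    using ro unfolding right_order_def by blast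
  have tot: "\<And>y z. y \<in> Q \<Longrightarrow> z \<in> Q \<Longrightarrow> y \<noteq> z \<Longrightarrow> lt y z \<or> lt z y"
    using ro unfolding right_order_def by blast
  have IHP: "\<And>p p'. p \<in> P \<Longrightarrow> p' \<in> P \<Longrightarrow> lt p p' \<Longrightarrow> \<iota> p < \<iota> p'"
    using IH unfolding P_def m_def by auto
  have finP: "finite (\<iota> ` P)" "\<iota> ` P \<noteq> {}" unfolding P_def m_def by auto
  have key: "\<forall>p\<in>P. (lt p x \<longrightarrow> \<iota> p < \<iota> x) \<and> (lt x p \<longrightarrow> \<iota> x < \<iota> p)"
  proof -
    have one: "1 \<le> m" by (simp add: m_def)
    note br = ri[unfolded right_iota_def, rule_format, OF mJ one, folded P_def x_def]
    show ?thesis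
    proof (cases "\<forall>p\<in>P. lt x p")
      case True
      hence v: "\<iota> x = Min (\<iota> ` P) - 1" using br by simp
      show ?thesis
      proof (intro ballI conjI impI)
        fix p assume p: "p \<in> P"
        have "Min (\<iota> ` P) \<le> \<iota> p" using p finP by simp
        thus "\<iota> x < \<iota> p" using v by simp
        assume "lt p x" thus "\<iota> p < \<iota> x"
          using True p tr[of x p x] irr[of x] xQ PQ by auto
      qed
    next
      case F1: False
      show ?thesis
      proof (cases "\<forall>p\<in>P. lt p x")
        case True
        hence v: "\<iota> x = Max (\<iota> ` P) + 1" using br F1 by simp
        show ?thesis
        proof (intro ballI conjI impI)
          fix p assume p: "p \<in> P"
          have "Max (\<iota> ` P) \<ge> \<iota> p" using p finP by simp
          thus "\<iota> p < \<iota> x" using v by simp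
          assume "lt x p" thus "\<iota> x < \<iota> p"
            using True p tr[of x p x] irr[of x] xQ PQ by auto
        qed
      next
        case False
        have ex: "\<exists>a\<in>P. \<exists>b\<in>P. lt a x \<and> lt x b \<and> (\<forall>p\<in>P. \<not> (lt a p \<and> lt p b)) \<and> \<iota> x = (\<iota> a + \<iota> b) / 2"
          using br unfolding if_not_P[OF F1] if_not_P[OF False] .
        then obtain a b where ab: "a \<in> P" "b \<in> P" "lt a x" "lt x b"
          "\<forall>p\<in>P. \<not> (lt a p \<and> lt p b)" "\<iota> x = (\<iota> a + \<iota> b) / 2"
          by blast
        have aQ: "a \<in> Q" and bQ: "b \<in> Q" using ab PQ by auto
        have "lt a b" using tr[OF aQ xQ bQ] ab by auto
        hence ab_lt: "\<iota> a < \<iota> b" using IHP ab by auto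
        show ?thesis
        proof (intro ballI conjI impI)
          fix p assume p: "p \<in> P" and px: "lt p x"
          have pQ: "p \<in> Q" using p PQ by auto
          have "\<iota> p \<le> \<iota> a"
          proof (cases "p = a")
            case False
            then consider "lt p a" | "lt a p" using tot pQ aQ by blast
            thus ?thesis
            proof cases
              case 1 thus ?thesis using IHP p ab by force
            next
              case 2
              hence nb: "\<not> lt p b" using ab p by blast
              have "lt p b" using tr[OF pQ xQ bQ] px ab by auto
              thus ?thesis using nb by simp
            qed
          qed simp
          thus "\<iota> p < \<iota> x" using ab ab_lt by simp
        next
          fix p assume p: "p \<in> P" and px: "lt x p"
          have pQ: "p \<in> Q" using p PQ by auto
          have "\<iota> b \<le> \<iota> p"
          proof (cases "p = b")
            case False
            then consider "lt b p" | "lt p b" using tot pQ bQ by blast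
            thus ?thesis
            proof cases
              case 1 thus ?thesis using IHP p ab by force
            next
              case 2
              hence nb: "\<not> lt a p" using ab p by blast
              have "lt a p" using tr[OF aQ xQ pQ] px ab by auto
              thus ?thesis using nb by simp
            qed
          qed simp
          thus "\<iota> x < \<iota> p" using ab ab_lt by simp
        qed
      qed
    qed
  qed
  show ?case
  proof (intro allI impI)
    fix i j assume i: "i \<le> Suc n" and j: "j \<le> Suc n" and l: "lt (e i) (e j)"
    show "\<iota> (e i) < \<iota> (e j)"
    proof (cases "i = m")
      case True
      hence "j \<noteq> m" using l irr xQ x_def by auto
      hence "e j \<in> P" using j m_def P_def by auto
      thus ?thesis using key l True x_def by auto
    next
      case Fi: False
      show ?thesis
      proof (cases "j = m")
        case True
        have "e i \<in> P" using i Fi m_def P_def by auto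
        thus ?thesis using key l True x_def by auto
      next
        case False
        thus ?thesis using IH Fi i j l m_def by auto
      qed
    qed
  qed
qed

lemma right_inj:
  assumes ro: "right_order Q op lt" and ri: "right_iota Q lt e J \<iota>" and en: "enumeration Q e J"
    and xQ: "x \<in> Q" and yQ: "y \<in> Q" and xy: "x \<noteq> y"
  shows "\<iota> x \<noteq> \<iota> y"
proof -
  have img: "e ` J = Q" using en unfolding enumeration_def bij_betw_def by auto
  obtain i j where ij: "i \<in> J" "j \<in> J" "x = e i" "y = e j" using xQ yQ img by blast
  define n where "n = max i j"
  have nJ: "n \<in> J" using ij n_def by (simp add: max_def)
  have "lt x y \<or> lt y x" using ro xQ yQ xy unfolding right_order_def by blast
  moreover have mono: "\<forall>i\<le>n. \<forall>j\<le>n. lt (e i) (e j) \<longrightarrow> \<iota> (e i) < \<iota> (e j)"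
    using right_mono[OF ro ri en nJ] .
  moreover have "i \<le> n" "j \<le> n" using n_def by auto
  ultimately show ?thesis using ij by (metis less_irrefl)
qed

theorem proposition3p7:
  fixes Q :: "'a set" and op :: "'a \<Rightarrow> 'a \<Rightarrow> 'a" and qh :: 'a
    and e :: "nat \<Rightarrow> 'a" and J :: "nat set"
  assumes "quandle Q op" and "countable Q" and "semi_latin Q op qh"
    and "enumeration Q e J" and "e 0 = qh"
  shows "(\<forall>c \<iota> \<rho>. circular_order Q op c \<and> circ_iota Q c e J \<iota> \<and> realizes Q op \<iota> \<rho> \<longrightarrow>
            (\<forall>q\<in>Q. \<forall>r\<in>Q. q \<noteq> r \<longrightarrow> \<rho> q (\<iota> qh) \<noteq> \<rho> r (\<iota> qh)))
       \<and> (\<forall>lt \<iota> \<rho>. right_order Q op lt \<and> right_iota Q lt e J \<iota> \<and> realizes Q op \<iota> \<rho> \<longrightarrow>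
            (\<forall>q\<in>Q. \<forall>r\<in>Q. q \<noteq> r \<longrightarrow> \<rho> q (\<iota> qh) \<noteq> \<rho> r (\<iota> qh)))"
proof -
  have qhQ: "qh \<in> Q" and injq: "inj_on (op qh) Q" using assms(3) unfolding semi_latin_def by auto
  have cl: "\<And>x y. x \<in> Q \<Longrightarrow> y \<in> Q \<Longrightarrow> op x y \<in> Q" using assms(1) unfolding quandle_def by auto
  have img: "e ` J = Q" using assms(4) unfolding enumeration_def bij_betw_def by auto
  have dist: "\<And>q r. q \<in> Q \<Longrightarrow> r \<in> Q \<Longrightarrow> q \<noteq> r \<Longrightarrow> op qh q \<noteq> op qh r"
    using injq by (auto dest: inj_onD)
  show ?thesis
  proof (intro conjI allI impI ballI)
    fix c \<iota> \<rho> q r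
    assume h: "circular_order Q op c \<and> circ_iota Q c e J \<iota> \<and> realizes Q op \<iota> \<rho>"
      and q: "q \<in> Q" and r: "r \<in> Q" and qr: "q \<noteq> r"
    have x: "op qh q \<in> Q" "op qh r \<in> Q" using cl qhQ q r by auto
    obtain i j where ij: "i \<in> J" "j \<in> J" "op qh q = e i" "op qh r = e j" using x img by blast
    have "i \<noteq> j" using ij dist[OF q r qr] by auto
    hence "\<iota> (e i) \<noteq> \<iota> (e j)" using circ_inj[of Q op c e J \<iota> i j] h assms(4) ij by auto
    thus "\<rho> q (\<iota> qh) \<noteq> \<rho> r (\<iota> qh)" using h q r qhQ ij unfolding realizes_def by auto
  next
    fix lt \<iota> \<rho> q r
    assume h: "right_order Q op lt \<and> right_iota Q lt e J \<iota> \<and> realizes Q op \<iota> \<rho>"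
      and q: "q \<in> Q" and r: "r \<in> Q" and qr: "q \<noteq> r"
    have x: "op qh q \<in> Q" "op qh r \<in> Q" using cl qhQ q r by auto
    have "\<iota> (op qh q) \<noteq> \<iota> (op qh r)"
      using right_inj[of Q op lt e J \<iota>] h assms(4) x dist[OF q r qr] by auto
    thus "\<rho> q (\<iota> qh) \<noteq> \<rho> r (\<iota> qh)" using h q r qhQ unfolding realizes_def by auto
  qed
qed

end
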